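(* Let $G$ be a DAG with maximum in-degree $\Delta_{in}$, and let $k,g,r$ be positive integers with $r\ge\Delta_{in}+1$. Let $\sigma=(T_1,\dots,T_s)$ be a non-idle greedy schedule of $G$ on $k$ processors. Consider the MPP pebbling strategy that, for $t=1,\dots,s$ in order, assigns the (at most $k$) nodes of $T_t$ to distinct processors and, for each such node $v$ on processor $p$: loads all in-neighbors of $v$ from slow memory into $p$ (via (R2) steps, in parallel across processors), computes $v$ on $p$ (one parallel (R3) step for all of $T_t$), saves $v$ to slow memory (one parallel (R1) step), and then deletes all red pebbles. The cost of this strategy is at most $2\cdot\bigl(g\cdot(\Delta_{in}+1)+1\bigr)\cdot\mathrm{OPT}$.
   Context: Multiprocessor red-blue pebbling (MPP). Input: a DAG $G=(V,E)$ with $n=|V|$ and positive integers $k$ (number of processors), $r$ (fast-memory size per processor), $g$ (cost of an I/O step). $\Delta_{in}$ denotes the maximum in-degree of $G$; sources/sinks are nodes of in-degree/out-degree $0$. A configuration is a tuple $(R^1,\dots,R^k,B)$ of subsets of $V$ ($R^j$ = nodes carrying a red pebble of processor $j$, $B$ = nodes carrying a blue pebble); it is valid if $|R^j|\le r$ for all $j$. The initial configuration has all sets empty; a configuration is terminal if every sink lies in $B\cup\bigcup_j R^j$. The transition rules are: (R1) for some $m\le k$, pairwise distinct processors $j_1,\dots,j_m$ and nodes $v_1,\dots,v_m$ with $v_i\in R^{j_i}$, add each $v_i$ to $B$ (cost $g$); (R2) for some $m\le k$, pairwise distinct processors $j_1,\dots,j_m$ and nodes $v_1,\dots,v_m\in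 B$, add each $v_i$ to $R^{j_i}$ (cost $g$); (R3) for some $m\le k$, pairwise distinct processors $j_1,\dots,j_m$ and nodes $v_1,\dots,v_m$ such that every in-neighbor of $v_i$ lies in $R^{j_i}$, add each $v_i$ to $R^{j_i}$ (cost $1$); (R4) remove a single red or blue pebble (cost $0$). A pebbling strategy is a sequence of valid configurations starting at the initial configuration and ending at a terminal one, each obtained from its predecessor by one rule; its cost is the sum of the costs of the rules applied. $\mathrm{OPT}$ denotes the minimum cost of a pebbling strategy. Applications of (R1),(R2) are called I/O steps and applications of (R3) compute steps. A non-idle greedy schedule of $G$ on $k$ processors is a partition of $V$ into nonempty sets $T_1,\dots,T_s$ with $|T_t|\le k$ such that every in-neighbor of a node in $T_t$ lies in $T_1\cup\dots\cup T_{t-1}$, and such that for every $t$ with $|T_t|<k$, every node not in $T_1\cup\dots\cup T_{t-1}$ all of whose in-neighbors lie in $T_1\cup\dots\cup T_{t-1}$ belongs to $T_t$. *)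

theory Defs
  imports Main
begin

definition in_nbrs :: "('v \<times> 'v) set \<Rightarrow> 'v \<Rightarrow> 'v set" where
  "in_nbrs E v = {u. (u, v) \<in> E}"

definition is_dag :: "'v set \<Rightarrow> ('v \<times> 'v) set \<Rightarrow> bool" where
  "is_dag V E \<longleftrightarrow> finite V \<and> E \<subseteq> V \<times> V \<and> acyclic E"

definition max_indeg :: "'v set \<Rightarrow> ('v \<times> 'v) set \<Rightarrow> nat" where
  "max_indeg V E = Max (insert 0 ((\<lambda>v. card (in_nbrs E v)) ` V))"

definition sinks :: "'v set \<Rightarrow> ('v \<times> 'v) set \<Rightarrow> 'v set" where
  "sinks V E = {v \<in> V. \<forall>w. (v, w) \<notin> E}"

text \<open>A configuration: red pebble sets R j for processors j < k (sets for j >= k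
  are never touched and stay empty), and the blue pebble set B.\<close>

type_synonym 'v conf = "(nat \<Rightarrow> 'v set) \<times> 'v set"

definition init_conf :: "'v conf" where
  "init_conf = (\<lambda>_. {}, {})"

definition valid_conf :: "nat \<Rightarrow> nat \<Rightarrow> 'v conf \<Rightarrow> bool" where
  "valid_conf k r C \<longleftrightarrow> (\<forall>j<k. card (fst C j) \<le> r)"

definition terminal_conf :: "'v set \<Rightarrow> ('v \<times> 'v) set \<Rightarrow> nat \<Rightarrow> 'v conf \<Rightarrow> bool" where
  "terminal_conf V E k C \<longleftrightarrow> (\<forall>v \<in> sinks V E. v \<in> snd C \<or> (\<exists>j<k. v \<in> fst C j))"

text \<open>A parallel action: a partial map f from pairwise distinct processors
  (its domain, a nonempty subset of {0..<k}) to nodes.\<close>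

definition par_action :: "nat \<Rightarrow> (nat \<Rightarrow> 'v option) \<Rightarrow> bool" where
  "par_action k f \<longleftrightarrow> dom f \<subseteq> {..<k} \<and> dom f \<noteq> {}"

definition mpp_step ::
  "'v set \<Rightarrow> ('v \<times> 'v) set \<Rightarrow> nat \<Rightarrow> nat \<Rightarrow> 'v conf \<Rightarrow> nat \<Rightarrow> 'v conf \<Rightarrow> bool" where
  "mpp_step V E k g C c C' \<longleftrightarrow>
     \<comment> \<open>(R1) save to slow memory\<close>
     (\<exists>f. par_action k f \<and> (\<forall>j v. f j = Some v \<longrightarrow> v \<in> fst C j) \<and>
          C' = (fst C, snd C \<union> ran f) \<and> c = g)
   \<or> \<comment> \<open>(R2) load from slow memory\<close>
     (\<exists>f. par_action k f \<and> (\<forall>j v. f j = Some v \<longrightarrow> v \<in> snd C) \<and>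
          C' = (\<lambda>j. fst C j \<union> set_option (f j), snd C) \<and> c = g)
   \<or> \<comment> \<open>(R3) compute\<close>
     (\<exists>f. par_action k f \<and>
          (\<forall>j v. f j = Some v \<longrightarrow> v \<in> V \<and> in_nbrs E v \<subseteq> fst C j) \<and>
          C' = (\<lambda>j. fst C j \<union> set_option (f j), snd C) \<and> c = 1)
   \<or> \<comment> \<open>(R4) remove a single pebble\<close>
     (((\<exists>j<k. \<exists>v \<in> fst C j. C' = ((fst C)(j := fst C j - {v}), snd C)) \<or>
       (\<exists>v \<in> snd C. C' = (fst C, snd C - {v}))) \<and> c = 0)"

text \<open>A strategy is recorded as the list of (cost of applied rule, resulting configuration)
  starting from the initial configuration.\<close>

definition strat_confs :: "(nat \<times> 'v conf) list \<Rightarrow> 'v conf list" where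
  "strat_confs ss = init_conf # map snd ss"

definition is_strategy ::
  "'v set \<Rightarrow> ('v \<times> 'v) set \<Rightarrow> nat \<Rightarrow> nat \<Rightarrow> nat \<Rightarrow> (nat \<times> 'v conf) list \<Rightarrow> bool" where
  "is_strategy V E k r g ss \<longleftrightarrow>
     (\<forall>i < length ss. mpp_step V E k g (strat_confs ss ! i) (fst (ss ! i)) (strat_confs ss ! Suc i)) \<and>
     (\<forall>C \<in> set (strat_confs ss). valid_conf k r C) \<and>
     terminal_conf V E k (last (strat_confs ss))"

definition strat_cost :: "(nat \<times> 'v conf) list \<Rightarrow> nat" where
  "strat_cost ss = sum_list (map fst ss)"

definition OPT :: "'v set \<Rightarrow> ('v \<times> 'v) set \<Rightarrow> nat \<Rightarrow> nat \<Rightarrow> nat \<Rightarrow> nat" where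
  "OPT V E k r g = Inf {strat_cost ss | ss. is_strategy V E k r g ss}"

definition done_before :: "'v set list \<Rightarrow> nat \<Rightarrow> 'v set" where
  "done_before Ts t = \<Union> (set (take t Ts))"

definition nonidle_greedy_schedule ::
  "'v set \<Rightarrow> ('v \<times> 'v) set \<Rightarrow> nat \<Rightarrow> 'v set list \<Rightarrow> bool" where
  "nonidle_greedy_schedule V E k Ts \<longleftrightarrow>
     \<Union> (set Ts) = V \<and>
     (\<forall>t < length Ts. Ts ! t \<noteq> {} \<and> card (Ts ! t) \<le> k) \<and>
     (\<forall>t < length Ts. \<forall>t' < length Ts. t \<noteq> t' \<longrightarrow> Ts ! t \<inter> Ts ! t' = {}) \<and>
     (\<forall>t < length Ts. \<forall>v \<in> Ts ! t. in_nbrs E v \<subseteq> done_before Ts t) \<and>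
     (\<forall>t < length Ts. card (Ts ! t) < k \<longrightarrow>
        (\<forall>v \<in> V - done_before Ts t. in_nbrs E v \<subseteq> done_before Ts t \<longrightarrow> v \<in> Ts ! t))"

text \<open>Round for the node set T, with processor assignment p (injective on T),
  an enumeration nb v of the in-neighbours of each node v, and blue set B at
  the start of the round (all red sets are empty at the start of a round).\<close>

definition load_conf ::
  "'v set \<Rightarrow> ('v \<Rightarrow> nat) \<Rightarrow> ('v \<Rightarrow> 'v list) \<Rightarrow> 'v set \<Rightarrow> nat \<Rightarrow> 'v conf" where
  "load_conf T p nb B i =
     (\<lambda>j. \<Union> {set (take (Suc i) (nb v)) | v. v \<in> T \<and> p v = j}, B)"

definition comp_reds :: "'v set \<Rightarrow> ('v \<Rightarrow> nat) \<Rightarrow> ('v \<Rightarrow> 'v list) \<Rightarrow> nat \<Rightarrow> 'v set" where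
  "comp_reds T p nb j = \<Union> {insert v (set (nb v)) | v. v \<in> T \<and> p v = j}"

definition del_order :: "nat \<Rightarrow> 'v set \<Rightarrow> ('v \<Rightarrow> nat) \<Rightarrow> ('v \<Rightarrow> 'v list) \<Rightarrow> (nat \<times> 'v) list" where
  "del_order k T p nb =
     (SOME L. distinct L \<and> set L = {(j, u). j < k \<and> u \<in> comp_reds T p nb j})"

definition round_steps ::
  "nat \<Rightarrow> nat \<Rightarrow> 'v set \<Rightarrow> ('v \<Rightarrow> nat) \<Rightarrow> ('v \<Rightarrow> 'v list) \<Rightarrow> 'v set \<Rightarrow> (nat \<times> 'v conf) list" where
  "round_steps k g T p nb B =
     (let D = Max (insert 0 ((\<lambda>v. length (nb v)) ` T));
          L = del_order k T p nb
      in map (\<lambda>i. (g, load_conf T p nb B i)) [0..<D]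
         @ [(1, (comp_reds T p nb, B)), (g, (comp_reds T p nb, B \<union> T))]
         @ map (\<lambda>m. (0, (\<lambda>j. comp_reds T p nb j - {u. (j, u) \<in> set (take (Suc m) L)}, B \<union> T)))
               [0..<length L])"

definition greedy_strategy ::
  "nat \<Rightarrow> nat \<Rightarrow> 'v set list \<Rightarrow> (nat \<Rightarrow> 'v \<Rightarrow> nat) \<Rightarrow> ('v \<Rightarrow> 'v list) \<Rightarrow> (nat \<times> 'v conf) list" where
  "greedy_strategy k g Ts proc nb =
     concat (map (\<lambda>t. round_steps k g (Ts ! t) (proc t) nb (done_before Ts t)) [0..<length Ts])"

end

theory Submission
  imports Defs
begin

fun steps_ok :: "'v set \<Rightarrow> ('v\<times>'v) set \<Rightarrow> nat \<Rightarrow> nat \<Rightarrow> 'v conf \<Rightarrow> (nat \<times> 'v conf) list \<Rightarrow> bool" where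
  "steps_ok V E k g C [] = True"
| "steps_ok V E k g C (x#xs) = (mpp_step V E k g C (fst x) (snd x) \<and> steps_ok V E k g (snd x) xs)"

lemma steps_ok_iff:
  "steps_ok V E k g C ss \<longleftrightarrow>
   (\<forall>i<length ss. mpp_step V E k g ((C # map snd ss) ! i) (fst (ss!i)) ((C # map snd ss) ! Suc i))"
proof (induction ss arbitrary: C)
  case Nil
  then show ?case by simp
next
  case (Cons a ss)
  show ?case
    apply (simp add: Cons.IH)
    apply (rule iffI)
     apply (auto simp: less_Suc_eq_0_disj)
    done
qed

lemma is_strategy_iff:
  "is_strategy V E k r g ss \<longleftrightarrow> steps_ok V E k g init_conf ss \<and>
     (\<forall>C \<in> set (strat_confs ss). valid_conf k r C) \<and>
     terminal_conf V E k (last (strat_confs ss))"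
  unfolding is_strategy_def steps_ok_iff strat_confs_def by simp

lemma steps_ok_append:
  "steps_ok V E k g C (xs @ ys) \<longleftrightarrow> steps_ok V E k g C xs \<and> steps_ok V E k g (last (C # map snd xs)) ys"
  by (induction xs arbitrary: C) auto

lemma last_append_conf:
  "last (C # map snd (xs @ ys)) = last (last (C # map snd xs) # map snd ys)"
  by (cases ys) auto

definition nodes :: "nat \<Rightarrow> 'v conf \<Rightarrow> 'v set" where
  "nodes k C = snd C \<union> (\<Union>j<k. fst C j)"

definition nf :: "'v set list \<Rightarrow> nat \<Rightarrow> nat \<Rightarrow> nat" where
  "nf Ts k t = card {t'. t' < t \<and> card (Ts!t') < k}"

lemma nf_Suc: "nf Ts k (Suc t) = nf Ts k t + (if card (Ts!t) < k then 1 else 0)"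
proof -
  have "{t'. t' < Suc t \<and> card (Ts!t') < k} =
        {t'. t' < t \<and> card (Ts!t') < k} \<union> (if card (Ts!t) < k then {t} else {})"
    by (auto simp: less_Suc_eq)
  then show ?thesis unfolding nf_def by auto
qed

lemma nf_exists: "Suc a \<le> nf Ts k t \<Longrightarrow> \<exists>t'<t. card (Ts!t') < k \<and> a \<le> nf Ts k t'"
proof (induction t)
  case 0
  then show ?case by (simp add: nf_def)
next
  case (Suc t)
  show ?case
  proof (cases "card (Ts!t) < k")
    case True
    then show ?thesis using Suc.prems by (auto simp: nf_Suc intro!: exI[of _ t])
  next
    case False
    then show ?thesis using Suc by (auto simp: nf_Suc) (metis less_SucI)
  qed
qed

lemma done_before_Suc: "t < length Ts \<Longrightarrow> done_before Ts (Suc t) = done_before Ts t \<union> Ts ! t"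
  unfolding done_before_def by (auto simp: take_Suc_conv_app_nth)

lemma done_before_mono: "t \<le> t' \<Longrightarrow> done_before Ts t \<subseteq> done_before Ts t'"
  unfolding done_before_def by (meson Sup_subset_mono set_take_subset_set_take)

definition pinv :: "'v set \<Rightarrow> ('v\<times>'v) set \<Rightarrow> nat \<Rightarrow> 'v set list \<Rightarrow> 'v set \<Rightarrow> 'v conf \<Rightarrow> nat \<Rightarrow> bool" where
  "pinv V E k Ts K C c \<longleftrightarrow> finite K \<and> K \<subseteq> V \<and> nodes k C \<subseteq> K \<and> (\<forall>v\<in>K. in_nbrs E v \<subseteq> K) \<and>
     card K \<le> k * c \<and> (\<forall>t \<le> length Ts. c \<le> nf Ts k t \<longrightarrow> K \<subseteq> done_before Ts t)"

lemma inv_mono_cost: "pinv V E k Ts K C c \<Longrightarrow> nodes k C' \<subseteq> K \<Longrightarrow> c \<le> c' \<Longrightarrow> pinv V E k Ts K C' c'"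
  unfolding pinv_def
  by (meson dual_order.trans mult_le_mono2)

lemma ran_sub: "dom f \<subseteq> {..<k} \<Longrightarrow> (\<Union>j<k. set_option (f j)) = ran f"
  by (auto simp: ran_def)

lemma card_ran_le: "dom f \<subseteq> {..<k} \<Longrightarrow> card (ran f) \<le> k"
proof -
  assume a: "dom f \<subseteq> {..<k}"
  have "ran f = (\<lambda>j. the (f j)) ` dom f" by (force simp: ran_def dom_def)
  then have "card (ran f) \<le> card (dom f)" by (metis card_image_le finite_lessThan finite_subset a)
  also have "\<dots> \<le> k" using a by (metis card_lessThan card_mono finite_lessThan)
  finally show ?thesis .
qed

lemma r4_nodes:
  assumes "((\<exists>j<k. \<exists>v \<in> fst C j. C' = ((fst C)(j := fst C j - {v}), snd C)) \<or>
       (\<exists>v \<in> snd C. C' = (fst C, snd C - {v})))"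
  shows "nodes k C' \<subseteq> nodes k C"
  using assms unfolding nodes_def by (auto split: if_splits)

lemma inv_R4: "nodes k C' \<subseteq> nodes k C \<Longrightarrow> pinv V E k Ts K C c0 \<Longrightarrow> \<exists>K'. pinv V E k Ts K' C' (c0 + c)"
proof -
  assume a: "nodes k C' \<subseteq> nodes k C" and b: "pinv V E k Ts K C c0"
  have "nodes k C \<subseteq> K" using b by (simp add: pinv_def)
  then have "nodes k C' \<subseteq> K" using a by blast
  then show ?thesis using inv_mono_cost[OF b, of C' "c0+c"] by auto
qed

lemma step_inv:
  assumes step: "mpp_step V E k g C c C'"
    and I: "pinv V E k Ts K C c0"
    and sched: "nonidle_greedy_schedule V E k Ts"
  shows "\<exists>K'. pinv V E k Ts K' C' (c0 + c)"
  using step unfolding mpp_step_def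
proof (elim disjE exE conjE)
  fix f assume pa: "par_action k f" and rd: "\<forall>j v. f j = Some v \<longrightarrow> v \<in> fst C j"
    and C': "C' = (fst C, snd C \<union> ran f)" and "c = g"
  have "ran f \<subseteq> nodes k C" using rd pa unfolding nodes_def par_action_def ran_def
    by auto (metis domI lessThan_iff subsetD)
  moreover have "nodes k C \<subseteq> K" using I by (simp add: pinv_def)
  moreover have "nodes k C' = nodes k C \<union> ran f" by (auto simp: nodes_def C')
  ultimately have "nodes k C' \<subseteq> K" by auto
  then show ?thesis using inv_mono_cost[OF I, of C' "c0+c"] by auto
next
  fix f assume pa: "par_action k f" and rd: "\<forall>j v. f j = Some v \<longrightarrow> v \<in> snd C"
    and C': "C' = (\<lambda>j. fst C j \<union> set_option (f j), snd C)" and "c = g"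
  have "nodes k C' = nodes k C \<union> ran f" using pa C' unfolding nodes_def par_action_def
    using ran_sub[of f k] by auto
  moreover have "ran f \<subseteq> snd C" using rd by (auto simp: ran_def)
  ultimately have "nodes k C' \<subseteq> K" using I unfolding nodes_def pinv_def by auto
  then show ?thesis using inv_mono_cost[OF I, of C' "c0+c"] by auto
next
  fix f assume pa: "par_action k f" and rd: "\<forall>j v. f j = Some v \<longrightarrow> v \<in> V \<and> in_nbrs E v \<subseteq> fst C j"
    and C': "C' = (\<lambda>j. fst C j \<union> set_option (f j), snd C)" and c1: "c = 1"
  have nC': "nodes k C' = nodes k C \<union> ran f" using pa C' unfolding nodes_def par_action_def
    using ran_sub[of f k] by auto
  have rV: "ran f \<subseteq> V" using rd by (auto simp: ran_def)
  have rN: "\<forall>v\<in>ran f. in_nbrs E v \<subseteq> K"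
  proof
    fix v assume "v \<in> ran f"
    then obtain j where fj: "f j = Some v" by (auto simp: ran_def)
    then have "j < k" using pa unfolding par_action_def by auto
    then have "fst C j \<subseteq> K" using I unfolding pinv_def nodes_def by auto
    then show "in_nbrs E v \<subseteq> K" using rd fj by blast
  qed
  define K' where "K' = K \<union> ran f"
  have fin: "finite (ran f)" using pa unfolding par_action_def
    by (meson finite_lessThan finite_ran finite_subset)
  have "pinv V E k Ts K' C' (c0 + c)"
    unfolding pinv_def
  proof (intro conjI)
    show "finite K'" using I fin unfolding K'_def pinv_def by auto
    show "K' \<subseteq> V" using I rV unfolding K'_def pinv_def by auto
    show "nodes k C' \<subseteq> K'" using I nC' unfolding K'_def pinv_def by auto
    show "\<forall>v\<in>K'. in_nbrs E v \<subseteq> K'" using I rN unfolding K'_def pinv_def by blast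
    have "card K' \<le> card K + card (ran f)" unfolding K'_def by (rule card_Un_le)
    also have "\<dots> \<le> k * c0 + k" using I card_ran_le[of f k] pa unfolding pinv_def par_action_def by auto
    finally show "card K' \<le> k * (c0 + c)" using c1 by simp
    show "\<forall>t\<le>length Ts. c0 + c \<le> nf Ts k t \<longrightarrow> K' \<subseteq> done_before Ts t"
    proof (intro allI impI)
      fix t assume t: "t \<le> length Ts" and ct: "c0 + c \<le> nf Ts k t"
      then obtain t' where t': "t' < t" "card (Ts!t') < k" "c0 \<le> nf Ts k t'"
        using nf_exists[of c0 Ts k t] c1 by auto
      have KD: "K \<subseteq> done_before Ts t'" using I t t' unfolding pinv_def by auto
      have "ran f \<subseteq> done_before Ts (Suc t')"
      proof
        fix v assume v: "v \<in> ran f"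
        have "t' < length Ts" using t t' by auto
        moreover have "in_nbrs E v \<subseteq> done_before Ts t'" using rN v KD by blast
        moreover have NF: "\<forall>t<length Ts. card (Ts!t) < k \<longrightarrow> (\<forall>v\<in>V - done_before Ts t. in_nbrs E v \<subseteq> done_before Ts t \<longrightarrow> v \<in> Ts!t)"
          using sched unfolding nonidle_greedy_schedule_def by (elim conjE) assumption
        moreover have "v \<in> V" using v rV by auto
        ultimately have "v \<in> done_before Ts t' \<union> Ts ! t'"
          using t'(2) by (cases "v \<in> done_before Ts t'") auto
        then show "v \<in> done_before Ts (Suc t')" using done_before_Suc \<open>t' < length Ts\<close> by auto
      qed
      moreover have "done_before Ts (Suc t') \<subseteq> done_before Ts t" using t' done_before_mono[of "Suc t'" t Ts] by auto
      moreover have "done_before Ts t' \<subseteq> done_before Ts t" using t' done_before_mono[of "t'" t Ts] by auto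
      ultimately show "K' \<subseteq> done_before Ts t" using KD unfolding K'_def by blast
    qed
  qed
  then show ?thesis by blast
qed (rule inv_R4[OF _ I]; auto simp: nodes_def split: if_splits)+

lemma steps_inv:
  assumes "steps_ok V E k g C ss" "pinv V E k Ts K C c0" "nonidle_greedy_schedule V E k Ts"
  shows "\<exists>K'. pinv V E k Ts K' (last (C # map snd ss)) (c0 + strat_cost ss)"
  using assms
proof (induction ss arbitrary: C K c0)
  case Nil
  then show ?case by (auto simp: strat_cost_def)
next
  case (Cons a ss)
  then have st: "mpp_step V E k g C (fst a) (snd a)" and rest: "steps_ok V E k g (snd a) ss" by auto
  obtain K1 where K1: "pinv V E k Ts K1 (snd a) (c0 + fst a)"
    using step_inv[OF st Cons.prems(2) Cons.prems(3)] by blast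
  obtain K' where "pinv V E k Ts K' (last (snd a # map snd ss)) (c0 + fst a + strat_cost ss)"
    using Cons.IH[OF rest K1 Cons.prems(3)] by blast
  then show ?case by (auto simp: strat_cost_def add.assoc)
qed

lemma disj_done: "nonidle_greedy_schedule V E k Ts \<Longrightarrow> t < length Ts \<Longrightarrow> Ts!t \<inter> done_before Ts t = {}"
proof -
  assume s: "nonidle_greedy_schedule V E k Ts" and t: "t < length Ts"
  have pw: "\<forall>t < length Ts. \<forall>t' < length Ts. t \<noteq> t' \<longrightarrow> Ts ! t \<inter> Ts ! t' = {}"
    using s unfolding nonidle_greedy_schedule_def by (elim conjE) assumption
  show ?thesis
  proof (rule ccontr)
    assume "Ts!t \<inter> done_before Ts t \<noteq> {}"
    then obtain x X where "x \<in> Ts!t" "x \<in> X" "X \<in> set (take t Ts)" unfolding done_before_def by auto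
    then obtain i where "i < length (take t Ts)" "X = take t Ts ! i" "x \<in> Ts!t" "x \<in> X"
      by (auto simp: in_set_conv_nth)
    then have "i < t" "X = Ts ! i" "x \<in> Ts!t" "x \<in> X" using t by auto
    moreover then have "Ts ! i \<inter> Ts ! t = {}" using pw t by auto
    ultimately show False by auto
  qed
qed

lemma lower_bound:
  assumes dag: "is_dag V E" and k: "k > 0"
    and sched: "nonidle_greedy_schedule V E k Ts"
    and strat: "is_strategy V E k r g ss"
  shows "length Ts \<le> 2 * strat_cost ss"
proof -
  let ?s = "length Ts"
  let ?c = "strat_cost ss"
  have so: "steps_ok V E k g init_conf ss" and trm: "terminal_conf V E k (last (strat_confs ss))"
    using strat unfolding is_strategy_iff by auto
  have finV: "finite V" and EV: "E \<subseteq> V \<times> V" and ac: "acyclic E" using dag unfolding is_dag_def by auto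
  have I0: "pinv V E k Ts {} init_conf 0"
    unfolding pinv_def nodes_def init_conf_def by auto
  obtain K where K: "pinv V E k Ts K (last (init_conf # map snd ss)) ?c"
    using steps_inv[OF so I0 sched] by auto
  have nK: "nodes k (last (init_conf # map snd ss)) \<subseteq> K" using K by (simp add: pinv_def)
  have "sinks V E \<subseteq> nodes k (last (init_conf # map snd ss))"
    using trm unfolding terminal_conf_def strat_confs_def nodes_def by fastforce
  then have sinksK: "sinks V E \<subseteq> K" using nK by auto
  have closed: "\<forall>v\<in>K. in_nbrs E v \<subseteq> K" using K unfolding pinv_def by auto
  have wf: "wf (E\<inverse>)"
    using finite_acyclic_wf_converse[OF finite_subset[OF EV] ac] finV by auto
  have VK: "V \<subseteq> K"
  proof -
    have "\<forall>v. v \<in> V \<longrightarrow> v \<in> K"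
    proof (rule allI, rule wf_induct[OF wf, of "\<lambda>v. v \<in> V \<longrightarrow> v \<in> K"])
      fix v assume IH: "\<forall>y. (y, v) \<in> E\<inverse> \<longrightarrow> y \<in> V \<longrightarrow> y \<in> K"
      show "v \<in> V \<longrightarrow> v \<in> K"
      proof
        assume v: "v \<in> V"
        show "v \<in> K"
        proof (cases "v \<in> sinks V E")
          case True then show ?thesis using sinksK by auto
        next
          case False
          then obtain w where w: "(v, w) \<in> E" using v unfolding sinks_def by auto
          then have "w \<in> V" using EV by auto
          then have "w \<in> K" using IH w by auto
          then show ?thesis using closed w unfolding in_nbrs_def by auto
        qed
      qed
    qed
    then show ?thesis by auto
  qed
  have finK: "finite K" and cardK: "card K \<le> k * ?c"
    and KD: "\<forall>t \<le> ?s. ?c \<le> nf Ts k t \<longrightarrow> K \<subseteq> done_before Ts t" using K unfolding pinv_def by auto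
  have cardV: "card V \<le> k * ?c" using card_mono[OF finK VK] cardK by auto
  have N: "nf Ts k ?s \<le> ?c"
  proof (rule ccontr)
    assume "\<not> nf Ts k ?s \<le> ?c"
    then obtain t' where t': "t' < ?s" "?c \<le> nf Ts k t'" using nf_exists[of ?c Ts k ?s] by auto
    then have "K \<subseteq> done_before Ts t'" using KD by auto
    moreover have "Ts!t' \<subseteq> V" using sched t' unfolding nonidle_greedy_schedule_def
      by (metis Union_upper nth_mem)
    moreover have "Ts!t' \<noteq> {}" using sched t' unfolding nonidle_greedy_schedule_def by auto
    ultimately show False using disj_done[OF sched t'(1)] VK by blast
  qed
  define Fu where "Fu = {t. t < ?s \<and> \<not> card (Ts!t) < k}"
  define Nf where "Nf = {t. t < ?s \<and> card (Ts!t) < k}"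
  have sN: "?s = card Fu + card Nf"
  proof -
    have "{..<?s} = Fu \<union> Nf" "Fu \<inter> Nf = {}" unfolding Fu_def Nf_def by auto
    then show ?thesis by (metis card_Un_disjoint card_lessThan finite_Un finite_lessThan)
  qed
  have NN: "card Nf = nf Ts k ?s" unfolding Nf_def nf_def by simp
  have pw: "\<forall>t < ?s. \<forall>t' < ?s. t \<noteq> t' \<longrightarrow> Ts ! t \<inter> Ts ! t' = {}"
    using sched unfolding nonidle_greedy_schedule_def by (elim conjE) assumption
  have UV: "\<Union> (set Ts) = V" using sched unfolding nonidle_greedy_schedule_def by auto
  have "V = (\<Union>t\<in>{..<?s}. Ts!t)" using UV by (auto simp: in_set_conv_nth) (metis nth_mem)
  moreover have "\<forall>t\<in>{..<?s}. finite (Ts!t)" using UV finV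
    by (metis Union_upper finite_subset lessThan_iff nth_mem)
  ultimately have cV: "card V = (\<Sum>t\<in>{..<?s}. card (Ts!t))"
    using card_UN_disjoint[of "{..<?s}" "\<lambda>t. Ts!t"] pw by auto
  have "(\<Sum>t\<in>Fu. card (Ts!t)) \<le> (\<Sum>t\<in>{..<?s}. card (Ts!t))"
    by (rule sum_mono2) (auto simp: Fu_def)
  moreover have "(\<Sum>t\<in>Fu. card (Ts!t)) \<ge> (\<Sum>t\<in>Fu. k)"
    by (rule sum_mono) (auto simp: Fu_def)
  ultimately have "k * card Fu \<le> card V" using cV by (simp add: mult.commute)
  then have "k * card Fu \<le> k * ?c" using cardV by (rule order.trans)
  then have "card Fu \<le> ?c" using k by simp
  then show ?thesis using sN NN N by auto
qed

lemma steps_map: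
  assumes "\<forall>i<n. mpp_step V E k g (G i) (c i) (G (Suc i))"
  shows "steps_ok V E k g (G 0) (map (\<lambda>i. (c i, G (Suc i))) [0..<n]) \<and>
         last (G 0 # map snd (map (\<lambda>i. (c i, G (Suc i))) [0..<n])) = G n"
  using assms
proof (induction n)
  case 0
  then show ?case by simp
next
  case (Suc n)
  then have IH: "steps_ok V E k g (G 0) (map (\<lambda>i. (c i, G (Suc i))) [0..<n])"
    "last (G 0 # map snd (map (\<lambda>i. (c i, G (Suc i))) [0..<n])) = G n" by auto
  have st: "mpp_step V E k g (G n) (c n) (G (Suc n))" using Suc.prems by auto
  show ?case using IH st by (simp add: steps_ok_append)
qed

lemma UN_inj:
  assumes "inj_on p T"
  shows "\<Union> {h v | v. v \<in> T \<and> p v = j} = (if j \<in> p ` T then h (the_inv_into T p j) else {})"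
proof (cases "j \<in> p ` T")
  case True
  then obtain v where v: "v \<in> T" "j = p v" by auto
  have "{h w | w. w \<in> T \<and> p w = j} = {h v}" using v assms by (auto dest: inj_onD)
  then show ?thesis using True v the_inv_into_f_f[OF assms v(1)] by auto
next
  case False
  then have "{h w | w. w \<in> T \<and> p w = j} = {}" by auto
  then show ?thesis using False by auto
qed

lemma comp_reds_eq: "inj_on p T \<Longrightarrow> comp_reds T p nb j =
   (if j \<in> p ` T then insert (the_inv_into T p j) (set (nb (the_inv_into T p j))) else {})"
  unfolding comp_reds_def by (rule UN_inj)

lemma load_conf_eq: "inj_on p T \<Longrightarrow> load_conf T p nb B i =
   (\<lambda>j. if j \<in> p ` T then set (take (Suc i) (nb (the_inv_into T p j))) else {}, B)"
  unfolding load_conf_def using UN_inj[of p T "\<lambda>v. set (take (Suc i) (nb v))"] by auto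

lemma set_take_Suc: "set (take (Suc i) xs) = set (take i xs) \<union> (if i < length xs then {xs!i} else {})"
  by (cases "i < length xs") (auto simp: take_Suc_conv_app_nth)

lemma round_ok:
  assumes finT: "finite T" and neT: "T \<noteq> {}"
    and inj: "inj_on p T" and pk: "p ` T \<subseteq> {..<k}"
    and TV: "T \<subseteq> V"
    and nbd: "\<forall>v\<in>T. distinct (nb v) \<and> set (nb v) = in_nbrs E v"
    and nbB: "\<forall>v\<in>T. in_nbrs E v \<subseteq> B"
    and lenr: "\<forall>v\<in>T. length (nb v) + 1 \<le> r"
    and lenM: "\<forall>v\<in>T. length (nb v) \<le> M"
  shows "steps_ok V E k g (\<lambda>_. {}, B) (round_steps k g T p nb B) \<and>
         last ((\<lambda>_. {}, B) # map snd (round_steps k g T p nb B)) = (\<lambda>_. {}, B \<union> T) \<and>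
         (\<forall>x\<in>set (round_steps k g T p nb B). valid_conf k r (snd x)) \<and>
         sum_list (map fst (round_steps k g T p nb B)) \<le> g * M + 1 + g"
proof -
  define q where "q = the_inv_into T p"
  have qT: "\<And>j. j \<in> p ` T \<Longrightarrow> q j \<in> T" unfolding q_def using the_inv_into_into[OF inj _ subset_refl] by auto
  have pq: "\<And>j. j \<in> p ` T \<Longrightarrow> p (q j) = j" unfolding q_def using f_the_inv_into_f[OF inj] by auto
  have qp: "\<And>v. v \<in> T \<Longrightarrow> q (p v) = v" unfolding q_def using the_inv_into_f_f[OF inj] by auto
  define D where "D = Max (insert 0 ((\<lambda>v. length (nb v)) ` T))"
  define L where "L = del_order k T p nb"
  have finI: "finite (insert 0 ((\<lambda>v. length (nb v)) ` T))" using finT by auto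
  have lenD: "\<And>v. v \<in> T \<Longrightarrow> length (nb v) \<le> D" unfolding D_def using finI by (auto intro: Max_ge)
  have Dex: "\<And>i. i < D \<Longrightarrow> \<exists>v\<in>T. i < length (nb v)"
  proof -
    fix i assume "i < D"
    then have "D \<noteq> 0" by auto
    moreover have "D \<in> insert 0 ((\<lambda>v. length (nb v)) ` T)" unfolding D_def using finI Max_in by blast
    ultimately obtain v where "v \<in> T" "D = length (nb v)" by auto
    then show "\<exists>v\<in>T. i < length (nb v)" using \<open>i < D\<close> by auto
  qed
  define G where "G i = ((\<lambda>j. if j \<in> p ` T then set (take i (nb (q j))) else {}), B)" for i
  have G0: "G 0 = (\<lambda>_. {}, B)" unfolding G_def by (auto simp: fun_eq_iff)
  have loadG: "\<And>i. load_conf T p nb B i = G (Suc i)"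
    unfolding G_def q_def using load_conf_eq[OF inj] by auto
  define CR where "CR = comp_reds T p nb"
  have CR: "CR j = (if j \<in> p ` T then insert (q j) (set (nb (q j))) else {})" for j
    unfolding CR_def q_def using comp_reds_eq[OF inj] by auto
  have load_steps: "\<forall>i<D. mpp_step V E k g (G i) g (G (Suc i))"
  proof (intro allI impI)
    fix i assume iD: "i < D"
    define f where "f j = (if j \<in> p ` T \<and> i < length (nb (q j)) then Some (nb (q j) ! i) else None)" for j
    have pa: "par_action k f"
    proof -
      obtain v where v: "v \<in> T" "i < length (nb v)" using Dex[OF iD] by auto
      then have "f (p v) \<noteq> None" unfolding f_def using qp by auto
      moreover have "dom f \<subseteq> {..<k}" using pk unfolding f_def dom_def by (auto split: if_splits)
      ultimately show ?thesis unfolding par_action_def by auto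
    qed
    have inB: "\<forall>j v. f j = Some v \<longrightarrow> v \<in> snd (G i)"
    proof (intro allI impI)
      fix j v assume "f j = Some v"
      then have j: "j \<in> p ` T" "i < length (nb (q j))" "v = nb (q j) ! i" unfolding f_def by (auto split: if_splits)
      then have "v \<in> set (nb (q j))" by auto
      then show "v \<in> snd (G i)" using nbd nbB qT[OF j(1)] unfolding G_def by auto
    qed
    have eq: "G (Suc i) = (\<lambda>j. fst (G i) j \<union> set_option (f j), snd (G i))"
      unfolding G_def f_def by (auto simp: fun_eq_iff set_take_Suc)
    show "mpp_step V E k g (G i) g (G (Suc i))"
      unfolding mpp_step_def using pa inB eq by blast
  qed
  have sG: "snd (G i) = B" for i unfolding G_def by simp
  have GD: "fst (G D) j = (if j \<in> p ` T then set (nb (q j)) else {})" for j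
    unfolding G_def using lenD qT by auto
  define fc where "fc j = (if j \<in> p ` T then Some (q j) else None)" for j
  have domfc: "dom fc = p ` T" unfolding fc_def dom_def by auto
  have pac: "par_action k fc" unfolding par_action_def domfc using pk neT by auto
  have ranfc: "ran fc = T"
  proof
    show "ran fc \<subseteq> T" unfolding fc_def ran_def using qT by (auto split: if_splits)
    show "T \<subseteq> ran fc"
    proof
      fix v assume "v \<in> T"
      then have "fc (p v) = Some v" unfolding fc_def using qp by auto
      then show "v \<in> ran fc" by (auto simp: ran_def)
    qed
  qed
  have comp: "mpp_step V E k g (G D) 1 (CR, B)"
  proof -
    have "\<forall>j v. fc j = Some v \<longrightarrow> v \<in> V \<and> in_nbrs E v \<subseteq> fst (G D) j"
    proof (intro allI impI)
      fix j v assume "fc j = Some v"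
      then have j: "j \<in> p ` T" "v = q j" unfolding fc_def by (auto split: if_splits)
      then show "v \<in> V \<and> in_nbrs E v \<subseteq> fst (G D) j" using qT[OF j(1)] TV nbd GD by auto
    qed
    moreover have "(CR, B) = (\<lambda>j. fst (G D) j \<union> set_option (fc j), snd (G D))"
      unfolding fc_def by (auto simp: fun_eq_iff CR GD sG)
    ultimately show ?thesis unfolding mpp_step_def using pac by blast
  qed
  have save: "mpp_step V E k g (CR, B) g (CR, B \<union> T)"
  proof -
    have "\<forall>j v. fc j = Some v \<longrightarrow> v \<in> fst (CR, B) j"
      unfolding fc_def by (auto simp: CR split: if_splits)
    moreover have "(CR, B \<union> T) = (fst (CR, B), snd (CR, B) \<union> ran fc)" using ranfc by simp
    ultimately show ?thesis unfolding mpp_step_def using pac by blast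
  qed
  have finCR: "finite (CR j)" for j unfolding CR by auto
  have SS: "{(j, u). j < k \<and> u \<in> comp_reds T p nb j} = Sigma {..<k} CR" unfolding CR_def by auto
  have finS: "finite (Sigma {..<k} CR)" using finCR by auto
  have Lprop: "distinct L \<and> set L = Sigma {..<k} CR"
    unfolding L_def del_order_def SS
    by (rule someI_ex) (metis finite_distinct_list finS)
  define H where "H m = ((\<lambda>j. CR j - {u. (j, u) \<in> set (take m L)}), B \<union> T)" for m
  have H0: "H 0 = (CR, B \<union> T)" unfolding H_def by (auto simp: fun_eq_iff)
  have Hlast: "H (length L) = (\<lambda>_. {}, B \<union> T)"
  proof -
    have "CR j - {u. (j, u) \<in> set L} = {}" for j
    proof (cases "j < k")
      case True then show ?thesis using Lprop by auto
    next
      case False then have "j \<notin> p ` T" using pk by auto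
      then show ?thesis using CR by auto
    qed
    then show ?thesis unfolding H_def by (auto simp: fun_eq_iff)
  qed
  have dels: "\<forall>m<length L. mpp_step V E k g (H m) 0 (H (Suc m))"
  proof (intro allI impI)
    fix m assume m: "m < length L"
    obtain j u where Lm: "L ! m = (j, u)" by (cases "L ! m") auto
    have "(j, u) \<in> set L" using Lm m nth_mem by metis
    then have ju: "j < k" "u \<in> CR j" using Lprop by auto
    have "L ! m \<in> set (drop m L)" using m by (simp add: Cons_nth_drop_Suc[symmetric])
    then have nt: "(j, u) \<notin> set (take m L)" using Lm Lprop set_take_disj_set_drop_if_distinct[of L m m] by auto
    have tk: "take (Suc m) L = take m L @ [(j, u)]" using m Lm by (simp add: take_Suc_conv_app_nth)
    have "u \<in> fst (H m) j" using ju nt unfolding H_def by auto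
    moreover have "H (Suc m) = ((fst (H m))(j := fst (H m) j - {u}), snd (H m))"
      unfolding H_def tk by (auto simp: fun_eq_iff)
    ultimately show "mpp_step V E k g (H m) 0 (H (Suc m))"
      unfolding mpp_step_def using ju by blast
  qed
  have RS: "round_steps k g T p nb B = map (\<lambda>i. (g, G (Suc i))) [0..<D] @
      [(1, (CR, B)), (g, (CR, B \<union> T))] @ map (\<lambda>m. (0::nat, H (Suc m))) [0..<length L]"
    unfolding round_steps_def Let_def D_def[symmetric] L_def[symmetric] CR_def[symmetric] H_def loadG by simp
  have A: "steps_ok V E k g (G 0) (map (\<lambda>i. (g, G (Suc i))) [0..<D]) \<and>
         last (G 0 # map snd (map (\<lambda>i. (g, G (Suc i))) [0..<D])) = G D"
    using steps_map[of D V E k g G "\<lambda>_. g"] load_steps by auto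
  have C: "steps_ok V E k g (H 0) (map (\<lambda>m. (0::nat, H (Suc m))) [0..<length L]) \<and>
         last (H 0 # map snd (map (\<lambda>m. (0::nat, H (Suc m))) [0..<length L])) = H (length L)"
    using steps_map[of "length L" V E k g H "\<lambda>_. 0"] dels by auto
  have B2: "steps_ok V E k g (G D) [(1, (CR, B)), (g, (CR, B \<union> T))]" using comp save by simp
  have P1: "steps_ok V E k g (\<lambda>_. {}, B) (round_steps k g T p nb B) \<and>
         last ((\<lambda>_. {}, B) # map snd (round_steps k g T p nb B)) = (\<lambda>_. {}, B \<union> T)"
    unfolding RS using A B2 C G0 H0 Hlast
    by (simp add: steps_ok_append last_append_conf)
  have cardCR: "card (CR j) \<le> r" for j
  proof (cases "j \<in> p ` T")
    case True
    then have "CR j = set (q j # nb (q j))" using CR by auto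
    then have "card (CR j) \<le> length (q j # nb (q j))" by (metis card_length)
    then show ?thesis using lenr qT[OF True] by auto
  next
    case False then show ?thesis using CR by auto
  qed
  have vG: "valid_conf k r (G (Suc i))" for i
    unfolding valid_conf_def
  proof (intro allI impI)
    fix j assume "j < k"
    show "card (fst (G (Suc i)) j) \<le> r"
    proof (cases "j \<in> p ` T")
      case True
      have "card (set (take (Suc i) (nb (q j)))) \<le> length (nb (q j))"
        by (metis card_length length_take min.bounded_iff order.trans order_refl)
      then show ?thesis using True lenr qT[OF True] unfolding G_def by auto
    next
      case False then show ?thesis unfolding G_def by auto
    qed
  qed
  have vH: "valid_conf k r (H m)" for m
    unfolding valid_conf_def H_def using cardCR finCR
    by (auto intro: order.trans[OF card_mono])
  have vC: "valid_conf k r (CR, X)" for X unfolding valid_conf_def using cardCR by auto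
  have P2: "\<forall>x\<in>set (round_steps k g T p nb B). valid_conf k r (snd x)"
    unfolding RS using vG vH vC by auto
  have DM: "D \<le> M" unfolding D_def using finI lenM by (auto intro!: Max.boundedI)
  have "sum_list (map fst (round_steps k g T p nb B)) = D * g + 1 + g"
    unfolding RS by (simp add: sum_list_triv comp_def)
  also have "\<dots> \<le> g * M + 1 + g" using DM by (simp add: mult.commute)
  finally show ?thesis using P1 P2 by auto
qed

lemma greedy_prefix:
  assumes dag: "is_dag V E"
    and rD: "r \<ge> max_indeg V E + 1"
    and sched: "nonidle_greedy_schedule V E k Ts"
    and pr: "\<forall>t < length Ts. inj_on (proc t) (Ts ! t) \<and> proc t ` (Ts ! t) \<subseteq> {..<k}"
    and nbh: "\<forall>v \<in> V. distinct (nb v) \<and> set (nb v) = in_nbrs E v"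
    and n: "n \<le> length Ts"
  shows "steps_ok V E k g init_conf (concat (map (\<lambda>t. round_steps k g (Ts ! t) (proc t) nb (done_before Ts t)) [0..<n])) \<and>
     last (init_conf # map snd (concat (map (\<lambda>t. round_steps k g (Ts ! t) (proc t) nb (done_before Ts t)) [0..<n])))
        = (\<lambda>_. {}, done_before Ts n) \<and>
     (\<forall>x\<in>set (concat (map (\<lambda>t. round_steps k g (Ts ! t) (proc t) nb (done_before Ts t)) [0..<n])). valid_conf k r (snd x)) \<and>
     sum_list (map fst (concat (map (\<lambda>t. round_steps k g (Ts ! t) (proc t) nb (done_before Ts t)) [0..<n])))
        \<le> n * (g * max_indeg V E + 1 + g)"
  using n
proof (induction n)
  case 0
  then show ?case by (simp add: init_conf_def done_before_def)
next
  case (Suc n)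
  let ?R = "\<lambda>t. round_steps k g (Ts ! t) (proc t) nb (done_before Ts t)"
  let ?S = "concat (map ?R [0..<n])"
  have nl: "n < length Ts" using Suc.prems by auto
  have IH: "steps_ok V E k g init_conf ?S" "last (init_conf # map snd ?S) = (\<lambda>_. {}, done_before Ts n)"
     "\<forall>x\<in>set ?S. valid_conf k r (snd x)" "sum_list (map fst ?S) \<le> n * (g * max_indeg V E + 1 + g)"
    using Suc by auto
  have finV: "finite V" using dag unfolding is_dag_def by auto
  have UV: "\<Union> (set Ts) = V" using sched unfolding nonidle_greedy_schedule_def by auto
  have TV: "Ts ! n \<subseteq> V" using UV nl by (metis Union_upper nth_mem)
  have neT: "Ts ! n \<noteq> {}" using sched nl unfolding nonidle_greedy_schedule_def by auto
  have nbB: "\<forall>v\<in>Ts!n. in_nbrs E v \<subseteq> done_before Ts n"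
    using sched nl unfolding nonidle_greedy_schedule_def by auto
  have lenM: "\<forall>v\<in>Ts!n. length (nb v) \<le> max_indeg V E"
  proof
    fix v assume "v \<in> Ts!n"
    then have v: "v \<in> V" using TV by auto
    then have "length (nb v) = card (in_nbrs E v)" using nbh by (metis distinct_card)
    also have "\<dots> \<le> max_indeg V E" unfolding max_indeg_def using finV v by (auto intro: Max_ge)
    finally show "length (nb v) \<le> max_indeg V E" .
  qed
  have R: "steps_ok V E k g (\<lambda>_. {}, done_before Ts n) (?R n) \<and>
         last ((\<lambda>_. {}, done_before Ts n) # map snd (?R n)) = (\<lambda>_. {}, done_before Ts n \<union> Ts ! n) \<and>
         (\<forall>x\<in>set (?R n). valid_conf k r (snd x)) \<and>
         sum_list (map fst (?R n)) \<le> g * max_indeg V E + 1 + g"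
    apply (rule round_ok)
    using finV TV neT pr nl nbh nbB lenM rD by (auto intro: finite_subset)
  have eqS: "concat (map ?R [0..<Suc n]) = ?S @ ?R n" by simp
  have L1: "steps_ok V E k g init_conf (?S @ ?R n)"
    using IH(1,2) R by (simp only: steps_ok_append)
  have L2: "last (init_conf # map snd (?S @ ?R n)) = (\<lambda>_. {}, done_before Ts (Suc n))"
    unfolding last_append_conf IH(2) using R done_before_Suc[OF nl] by simp
  have L3: "\<forall>x\<in>set (?S @ ?R n). valid_conf k r (snd x)" using IH(3) R by auto
  have L4: "sum_list (map fst (?S @ ?R n)) \<le> Suc n * (g * max_indeg V E + 1 + g)"
    using IH(4) R by simp
  show ?case unfolding eqS using L1 L2 L3 L4 by blast
qed

theorem lemma3:
  fixes V :: "'v set" and E :: "('v \<times> 'v) set" and k r g :: nat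
    and Ts :: "'v set list" and proc :: "nat \<Rightarrow> 'v \<Rightarrow> nat" and nb :: "'v \<Rightarrow> 'v list"
  assumes "is_dag V E"
    and "k > 0" and "g > 0" and "r > 0"
    and "r \<ge> max_indeg V E + 1"
    and "nonidle_greedy_schedule V E k Ts"
    and "\<forall>t < length Ts. inj_on (proc t) (Ts ! t) \<and> proc t ` (Ts ! t) \<subseteq> {..<k}"
    and "\<forall>v \<in> V. distinct (nb v) \<and> set (nb v) = in_nbrs E v"
  shows "is_strategy V E k r g (greedy_strategy k g Ts proc nb) \<and>
         strat_cost (greedy_strategy k g Ts proc nb)
           \<le> 2 * (g * (max_indeg V E + 1) + 1) * OPT V E k r g"
proof -
  let ?GS = "greedy_strategy k g Ts proc nb"
  let ?s = "length Ts"
  let ?M = "max_indeg V E"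
  have P: "steps_ok V E k g init_conf ?GS \<and> last (init_conf # map snd ?GS) = (\<lambda>_. {}, done_before Ts ?s) \<and>
     (\<forall>x\<in>set ?GS. valid_conf k r (snd x)) \<and> sum_list (map fst ?GS) \<le> ?s * (g * ?M + 1 + g)"
    unfolding greedy_strategy_def
    using greedy_prefix[OF assms(1) assms(5) assms(6) assms(7) assms(8), of ?s g] by simp
  have UV: "\<Union> (set Ts) = V" using assms(6) unfolding nonidle_greedy_schedule_def by auto
  have dV: "done_before Ts ?s = V" unfolding done_before_def using UV by simp
  have vi: "valid_conf k r init_conf" unfolding valid_conf_def init_conf_def by simp
  have strat: "is_strategy V E k r g ?GS"
    unfolding is_strategy_iff
  proof (intro conjI)
    show "steps_ok V E k g init_conf ?GS" using P by auto
    show "\<forall>C\<in>set (strat_confs ?GS). valid_conf k r C"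
      unfolding strat_confs_def using P vi by auto
    show "terminal_conf V E k (last (strat_confs ?GS))"
      unfolding strat_confs_def terminal_conf_def using P dV by (auto simp: sinks_def)
  qed
  have cost: "strat_cost ?GS \<le> ?s * (g * ?M + 1 + g)" using P unfolding strat_cost_def by auto
  have ne: "{strat_cost ss | ss. is_strategy V E k r g ss} \<noteq> {}" using strat by auto
  have "OPT V E k r g \<in> {strat_cost ss | ss. is_strategy V E k r g ss}"
    unfolding OPT_def by (rule Inf_nat_def1[OF ne])
  then obtain ss0 where ss0: "is_strategy V E k r g ss0" "OPT V E k r g = strat_cost ss0" by auto
  have sO: "?s \<le> 2 * OPT V E k r g"
    using lower_bound[OF assms(1) assms(2) assms(6) ss0(1)] ss0(2) by simp
  have "strat_cost ?GS \<le> ?s * (g * ?M + 1 + g)" by (rule cost)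
  also have "\<dots> \<le> (2 * OPT V E k r g) * (g * ?M + 1 + g)" using sO by (rule mult_le_mono1)
  also have "\<dots> = 2 * (g * (?M + 1) + 1) * OPT V E k r g" by (simp add: algebra_simps)
  finally show ?thesis using strat by auto
qed

end
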